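(* Let $L$ and $M$ be linear partial differential operators in $\mathbb{R}^n$ with coefficients in $\mathbf{F}$ such that $\mathrm{ord}\, L \geq 1$, $\mathrm{ord}\, M = 1$, and $L$ is not right divisible by $M$. Suppose they satisfy two relations $M_1L = L_1M$ and $\widetilde{M}_1L = \widetilde{L}_1M$ with differential operators $M_1, L_1, \widetilde{M}_1, \widetilde{L}_1$, where $\mathrm{Sym}\, L = \mathrm{Sym}\, L_1 = \mathrm{Sym}\, \widetilde{L}_1$. Then $M_1 = \widetilde{M}_1$ and $L_1 = \widetilde{L}_1$.
   Context: $\mathbf{F}$ is a differential field of functions of $x_1,\ldots,x_n$; operators lie in $\mathbf{F}[D_{x_1},\ldots,D_{x_n}]$. $\mathrm{Sym}$ denotes the principal symbol. $L$ is right divisible by $M$ if $L=SM$ for some differential operator $S$. *)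

theory Defs
  imports Main
begin

text \<open>
  Differential field: a field 'a (characteristic 0, as any field of functions) with n
  commuting derivations delta 0, ..., delta (n-1), the partial derivatives in x_1..x_n.
  A differential operator sum_alpha a_alpha D^alpha is represented by its coefficient
  function P :: (nat => nat) => 'a on multi-indices alpha (alpha i = 0 for i >= n),
  with finite support.
\<close>

definition diff_field :: "nat \<Rightarrow> (nat \<Rightarrow> 'a::field \<Rightarrow> 'a) \<Rightarrow> bool" where
  "diff_field n \<delta> \<longleftrightarrow>
     (\<forall>i<n. \<forall>x y. \<delta> i (x + y) = \<delta> i x + \<delta> i y) \<and>
     (\<forall>i<n. \<forall>x y. \<delta> i (x * y) = x * \<delta> i y + \<delta> i x * y) \<and>
     (\<forall>i<n. \<forall>j<n. \<forall>x. \<delta> i (\<delta> j x) = \<delta> j (\<delta> i x))"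

definition is_op :: "nat \<Rightarrow> ((nat \<Rightarrow> nat) \<Rightarrow> 'a::zero) \<Rightarrow> bool" where
  "is_op n P \<longleftrightarrow> finite {\<alpha>. P \<alpha> \<noteq> 0} \<and> (\<forall>\<alpha>. P \<alpha> \<noteq> 0 \<longrightarrow> (\<forall>i\<ge>n. \<alpha> i = 0))"

definition opsupp :: "((nat \<Rightarrow> nat) \<Rightarrow> 'a::zero) \<Rightarrow> (nat \<Rightarrow> nat) set" where
  "opsupp P = {\<alpha>. P \<alpha> \<noteq> 0}"

definition mdeg :: "nat \<Rightarrow> (nat \<Rightarrow> nat) \<Rightarrow> nat" where
  "mdeg n \<alpha> = (\<Sum>i<n. \<alpha> i)"

definition below :: "nat \<Rightarrow> (nat \<Rightarrow> nat) \<Rightarrow> (nat \<Rightarrow> nat) set" where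
  "below n \<alpha> = {\<gamma>. (\<forall>i<n. \<gamma> i \<le> \<alpha> i) \<and> (\<forall>i\<ge>n. \<gamma> i = 0)}"

definition mchoose :: "nat \<Rightarrow> (nat \<Rightarrow> nat) \<Rightarrow> (nat \<Rightarrow> nat) \<Rightarrow> nat" where
  "mchoose n \<alpha> \<gamma> = (\<Prod>i<n. \<alpha> i choose \<gamma> i)"

fun dpow :: "nat \<Rightarrow> (nat \<Rightarrow> 'a \<Rightarrow> 'a) \<Rightarrow> (nat \<Rightarrow> nat) \<Rightarrow> 'a \<Rightarrow> 'a" where
  "dpow 0 \<delta> \<gamma> = id"
| "dpow (Suc k) \<delta> \<gamma> = dpow k \<delta> \<gamma> \<circ> (\<delta> k ^^ \<gamma> k)"

text \<open>Composition of operators via the Leibniz rule: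
  (a D^alpha)(b D^beta) = sum_{gamma \<le> alpha} C(alpha,gamma) a (d^gamma b) D^(alpha-gamma+beta).\<close>
definition opmul :: "nat \<Rightarrow> (nat \<Rightarrow> 'a::field \<Rightarrow> 'a) \<Rightarrow>
    ((nat \<Rightarrow> nat) \<Rightarrow> 'a) \<Rightarrow> ((nat \<Rightarrow> nat) \<Rightarrow> 'a) \<Rightarrow> ((nat \<Rightarrow> nat) \<Rightarrow> 'a)" where
  "opmul n \<delta> P Q = (\<lambda>\<mu>. \<Sum>\<alpha>\<in>opsupp P. \<Sum>\<beta>\<in>opsupp Q. \<Sum>\<gamma>\<in>below n \<alpha>.
      if (\<lambda>i. \<alpha> i - \<gamma> i + \<beta> i) = \<mu>
      then P \<alpha> * of_nat (mchoose n \<alpha> \<gamma>) * dpow n \<delta> \<gamma> (Q \<beta>) else 0)"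

text \<open>Order (the zero operator gets order 0).\<close>
definition ord :: "nat \<Rightarrow> ((nat \<Rightarrow> nat) \<Rightarrow> 'a::zero) \<Rightarrow> nat" where
  "ord n P = (if opsupp P = {} then 0 else Max (mdeg n ` opsupp P))"

definition Sym :: "nat \<Rightarrow> ((nat \<Rightarrow> nat) \<Rightarrow> 'a::zero) \<Rightarrow> ((nat \<Rightarrow> nat) \<Rightarrow> 'a)" where
  "Sym n P = (\<lambda>\<alpha>. if mdeg n \<alpha> = ord n P then P \<alpha> else 0)"

definition right_divisible :: "nat \<Rightarrow> (nat \<Rightarrow> 'a::field \<Rightarrow> 'a) \<Rightarrow>
    ((nat \<Rightarrow> nat) \<Rightarrow> 'a) \<Rightarrow> ((nat \<Rightarrow> nat) \<Rightarrow> 'a) \<Rightarrow> bool" where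
  "right_divisible n \<delta> L M \<longleftrightarrow> (\<exists>S. is_op n S \<and> L = opmul n \<delta> S M)"

end

theory Submission
  imports Defs "HOL-Library.FuncSet"
begin

definition lexless :: "(nat \<Rightarrow> nat) \<Rightarrow> (nat \<Rightarrow> nat) \<Rightarrow> bool" where
  "lexless a b \<longleftrightarrow> (\<exists>i. a i < b i \<and> (\<forall>j<i. a j = b j))"

lemma lexless_irrefl: "\<not> lexless a a" by (auto simp: lexless_def)

lemma lexless_trans: assumes "lexless a b" "lexless b c" shows "lexless a c"
proof -
  from assms obtain i k where i: "a i < b i" "\<forall>j<i. a j = b j"
    and k: "b k < c k" "\<forall>j<k. b j = c j"
    by (auto simp: lexless_def)
  show ?thesis
  proof (cases "i < k")
    case True
    then have "a i < c i" "\<forall>j<i. a j = c j" using i k by auto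
    then show ?thesis unfolding lexless_def by blast
  next
    case False
    have "a k \<le> b k" using i False by (cases "i = k") auto
    then have "a k < c k" "\<forall>j<k. a j = c j" using i k False by auto
    then show ?thesis unfolding lexless_def by blast
  qed
qed

lemma lexless_total: assumes "a \<noteq> b" shows "lexless a b \<or> lexless b a"
proof -
  from assms obtain i where i: "a i \<noteq> b i" by auto
  define m where "m = (LEAST i. a i \<noteq> b i)"
  have m: "a m \<noteq> b m" unfolding m_def by (rule LeastI) (fact i)
  have "\<forall>j<m. a j = b j" unfolding m_def using not_less_Least by blast
  then show ?thesis using m unfolding lexless_def by (metis linorder_neqE_nat)
qed

lemma lex_max: assumes "finite A" "A \<noteq> {}" shows "\<exists>m\<in>A. \<forall>x\<in>A. \<not> lexless m x"
  using assms
proof (induction A rule: finite_ne_induct)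
  case (singleton x) then show ?case using lexless_irrefl by auto
next
  case (insert x F)
  then obtain m where m: "m \<in> F" "\<forall>y\<in>F. \<not> lexless m y" by blast
  show ?case
  proof (cases "lexless m x")
    case True
    have "\<forall>y\<in>insert x F. \<not> lexless x y" using m True lexless_trans lexless_irrefl by blast
    then show ?thesis by blast
  next
    case False then show ?thesis using m by blast
  qed
qed

lemma finite_below: "finite (below n \<alpha>)"
proof -
  have "(\<lambda>\<gamma>. restrict \<gamma> {..<n}) ` below n \<alpha> \<subseteq> PiE {..<n} (\<lambda>i. {..\<alpha> i})"
    by (auto simp: below_def PiE_def extensional_def)
  moreover have "inj_on (\<lambda>\<gamma>. restrict \<gamma> {..<n}) (below n \<alpha>)"
  proof (rule inj_onI)
    fix x y assume xy: "x \<in> below n \<alpha>" "y \<in> below n \<alpha>" "restrict x {..<n} = restrict y {..<n}"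
    show "x = y"
    proof
      fix i show "x i = y i"
      proof (cases "i < n")
        case True then show ?thesis using fun_cong[OF xy(3), of i] by simp
      next
        case False then show ?thesis using xy(1,2) by (auto simp: below_def)
      qed
    qed
  qed
  ultimately show ?thesis
    by (meson finite_PiE finite_atMost finite_lessThan finite_imageD finite_subset)
qed

lemma mdeg_add: "mdeg n (\<lambda>i. a i + b i) = mdeg n a + mdeg n b"
  by (simp add: mdeg_def sum.distrib)

lemma mdeg_agb:
  assumes "\<gamma> \<in> below n \<alpha>"
  shows "mdeg n (\<lambda>i. \<alpha> i - \<gamma> i + \<beta> i) = mdeg n \<alpha> - mdeg n \<gamma> + mdeg n \<beta>"
    and "mdeg n \<gamma> \<le> mdeg n \<alpha>"
proof -
  have le: "\<forall>i<n. \<gamma> i \<le> \<alpha> i" using assms by (auto simp: below_def)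
  have "mdeg n \<alpha> = (\<Sum>i<n. (\<alpha> i - \<gamma> i) + \<gamma> i)"
    unfolding mdeg_def by (rule sum.cong) (use le in auto)
  also have "\<dots> = mdeg n (\<lambda>i. \<alpha> i - \<gamma> i) + mdeg n \<gamma>"
    by (simp add: mdeg_def sum.distrib)
  finally have e: "mdeg n \<alpha> = mdeg n (\<lambda>i. \<alpha> i - \<gamma> i) + mdeg n \<gamma>" .
  then show "mdeg n \<gamma> \<le> mdeg n \<alpha>" by simp
  have "mdeg n (\<lambda>i. \<alpha> i - \<gamma> i + \<beta> i) = mdeg n (\<lambda>i. \<alpha> i - \<gamma> i) + mdeg n \<beta>"
    using mdeg_add[of n "\<lambda>i. \<alpha> i - \<gamma> i" \<beta>] by simp
  then show "mdeg n (\<lambda>i. \<alpha> i - \<gamma> i + \<beta> i) = mdeg n \<alpha> - mdeg n \<gamma> + mdeg n \<beta>"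
    using e by simp
qed

lemma below_zero: assumes "\<gamma> \<in> below n \<alpha>" "mdeg n \<gamma> = 0" shows "\<gamma> = (\<lambda>_. 0)"
proof
  fix i show "\<gamma> i = 0"
  proof (cases "i < n")
    case True then show ?thesis using assms(2) by (auto simp: mdeg_def)
  next
    case False then show ?thesis using assms(1) by (auto simp: below_def)
  qed
qed

lemma zero_below: "(\<lambda>_. 0) \<in> below n \<alpha>" by (simp add: below_def)

lemma below_z: "below n (\<lambda>_. 0) = {\<lambda>_. 0}"
  by (auto simp: below_def fun_eq_iff) (meson not_less)

lemma dpow_zero: "dpow k \<delta> (\<lambda>_. 0) = id"
  by (induction k) auto

lemma dpow_zero': "dpow k \<delta> (\<lambda>_. 0) x = x"
  by (simp add: dpow_zero)

lemma mchoose_zero: "mchoose n a (\<lambda>_. 0) = 1" by (simp add: mchoose_def)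

definition K where
  "K n \<delta> Q \<alpha> \<mu> = (\<Sum>\<beta>\<in>opsupp Q. \<Sum>\<gamma>\<in>below n \<alpha>.
      if (\<lambda>i. \<alpha> i - \<gamma> i + \<beta> i) = \<mu> then of_nat (mchoose n \<alpha> \<gamma>) * dpow n \<delta> \<gamma> (Q \<beta>) else 0)"

lemma opmul_K: "opmul n \<delta> P Q \<mu> = (\<Sum>\<alpha>\<in>opsupp P. P \<alpha> * K n \<delta> Q \<alpha> \<mu>)"
  unfolding opmul_def K_def sum_distrib_left
  by (intro sum.cong refl) (simp add: mult.assoc)

lemma opmul_sup: assumes "finite A" "opsupp P \<subseteq> A"
  shows "opmul n \<delta> P Q \<mu> = (\<Sum>\<alpha>\<in>A. P \<alpha> * K n \<delta> Q \<alpha> \<mu>)"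
  unfolding opmul_K
  by (rule sum.mono_neutral_left) (use assms in \<open>auto simp: opsupp_def\<close>)

lemma is_op_fin: "is_op n P \<Longrightarrow> finite (opsupp P)" by (simp add: is_op_def opsupp_def)

lemma opmul_diff:
  assumes "finite (opsupp P)" "finite (opsupp P')"
  shows "opmul n \<delta> (\<lambda>\<alpha>. P \<alpha> - P' \<alpha>) Q \<mu> = opmul n \<delta> P Q \<mu> - opmul n \<delta> P' Q \<mu>"
proof -
  let ?A = "opsupp P \<union> opsupp P'"
  have s: "opsupp (\<lambda>\<alpha>. P \<alpha> - P' \<alpha>) \<subseteq> ?A" by (auto simp: opsupp_def)
  show ?thesis
    using assms
    by (simp add: opmul_sup[OF _ s] opmul_sup[of ?A P] opmul_sup[of ?A P']
        left_diff_distrib sum_subtractf)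
qed

lemma opmul_scale:
  assumes "finite (opsupp P)"
  shows "opmul n \<delta> (\<lambda>\<alpha>. c * P \<alpha>) Q \<mu> = c * opmul n \<delta> P Q \<mu>"
proof -
  have s: "opsupp (\<lambda>\<alpha>. c * P \<alpha>) \<subseteq> opsupp P" by (auto simp: opsupp_def)
  show ?thesis
    using opmul_sup[OF assms s, of n \<delta> Q \<mu>] by (simp add: opmul_K sum_distrib_left mult.assoc)
qed

lemma opmul_const:
  assumes "opsupp F \<subseteq> {\<lambda>_. 0}" "finite (opsupp Q)"
  shows "opmul n \<delta> F Q \<mu> = F (\<lambda>_. 0) * Q \<mu>"
proof -
  have "opmul n \<delta> F Q \<mu> = F (\<lambda>_. 0) * K n \<delta> Q (\<lambda>_. 0) \<mu>"
    using opmul_sup[of "{\<lambda>_. 0}" F] assms by simp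
  moreover have "K n \<delta> Q (\<lambda>_. 0) \<mu> = (\<Sum>\<beta>\<in>opsupp Q. if \<beta> = \<mu> then Q \<beta> else 0)"
    unfolding K_def below_z by (intro sum.cong refl) (simp add: dpow_zero' mchoose_zero)
  moreover have "(\<Sum>\<beta>\<in>opsupp Q. if \<beta> = \<mu> then Q \<beta> else 0) = Q \<mu>"
    using assms(2) by (simp add: opsupp_def)
  ultimately show ?thesis by simp
qed


lemma ord_le: "finite (opsupp P) \<Longrightarrow> \<alpha> \<in> opsupp P \<Longrightarrow> mdeg n \<alpha> \<le> ord n P"
  by (auto simp: ord_def)

lemma ord_ex: "finite (opsupp P) \<Longrightarrow> opsupp P \<noteq> {} \<Longrightarrow> \<exists>\<alpha>\<in>opsupp P. mdeg n \<alpha> = ord n P"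
proof -
  assume a: "finite (opsupp P)" "opsupp P \<noteq> {}"
  then have "Max (mdeg n ` opsupp P) \<in> mdeg n ` opsupp P" by (intro Max_in) auto
  then obtain \<alpha> where "\<alpha> \<in> opsupp P" "mdeg n \<alpha> = Max (mdeg n ` opsupp P)" by (metis imageE)
  then show ?thesis using a unfolding ord_def by auto
qed

lemma opmul_upper:
  assumes "\<forall>\<alpha>\<in>opsupp P. mdeg n \<alpha> \<le> p" "\<forall>\<beta>\<in>opsupp Q. mdeg n \<beta> \<le> q"
    and "opmul n \<delta> P Q \<mu> \<noteq> 0"
  shows "mdeg n \<mu> \<le> p + q"
proof -
  from assms(3) obtain \<alpha> \<beta> \<gamma> where abg: "\<alpha> \<in> opsupp P" "\<beta> \<in> opsupp Q" "\<gamma> \<in> below n \<alpha>"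
    "(\<lambda>i. \<alpha> i - \<gamma> i + \<beta> i) = \<mu>"
  proof -
    from assms(3) obtain \<alpha> where a: "\<alpha> \<in> opsupp P" and s1:
      "(\<Sum>\<beta>\<in>opsupp Q. \<Sum>\<gamma>\<in>below n \<alpha>. if (\<lambda>i. \<alpha> i - \<gamma> i + \<beta> i) = \<mu>
      then P \<alpha> * of_nat (mchoose n \<alpha> \<gamma>) * dpow n \<delta> \<gamma> (Q \<beta>) else 0) \<noteq> 0"
      unfolding opmul_def by (rule sum.not_neutral_contains_not_neutral)
    from s1 obtain \<beta> where b: "\<beta> \<in> opsupp Q" and s2:
      "(\<Sum>\<gamma>\<in>below n \<alpha>. if (\<lambda>i. \<alpha> i - \<gamma> i + \<beta> i) = \<mu>
      then P \<alpha> * of_nat (mchoose n \<alpha> \<gamma>) * dpow n \<delta> \<gamma> (Q \<beta>) else 0) \<noteq> 0"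
      by (rule sum.not_neutral_contains_not_neutral)
    from s2 obtain \<gamma> where g: "\<gamma> \<in> below n \<alpha>" and s3:
      "(if (\<lambda>i. \<alpha> i - \<gamma> i + \<beta> i) = \<mu>
      then P \<alpha> * of_nat (mchoose n \<alpha> \<gamma>) * dpow n \<delta> \<gamma> (Q \<beta>) else 0) \<noteq> 0"
      by (rule sum.not_neutral_contains_not_neutral)
    from s3 have "(\<lambda>i. \<alpha> i - \<gamma> i + \<beta> i) = \<mu>" by (auto split: if_splits)
    then show ?thesis using a b g that by blast
  qed
  then have "mdeg n \<mu> = mdeg n \<alpha> - mdeg n \<gamma> + mdeg n \<beta>" using mdeg_agb(1) by blast
  then show ?thesis using assms(1,2) abg by fastforce
qed

lemma opmul_top:
  assumes "finite (opsupp P)" "finite (opsupp Q)" "opsupp P \<noteq> {}" "opsupp Q \<noteq> {}"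
  shows "\<exists>\<mu>. opmul n \<delta> P Q \<mu> \<noteq> 0 \<and> mdeg n \<mu> = ord n P + ord n Q"
proof -
  define TP where "TP = {\<alpha>\<in>opsupp P. mdeg n \<alpha> = ord n P}"
  define TQ where "TQ = {\<alpha>\<in>opsupp Q. mdeg n \<alpha> = ord n Q}"
  have "finite TP" "TP \<noteq> {}" using assms ord_ex[of P n] by (auto simp: TP_def)
  then obtain \<alpha>0 where a0: "\<alpha>0 \<in> TP" "\<forall>x\<in>TP. \<not> lexless \<alpha>0 x" using lex_max by blast
  have "finite TQ" "TQ \<noteq> {}" using assms ord_ex[of Q n] by (auto simp: TQ_def)
  then obtain \<beta>0 where b0: "\<beta>0 \<in> TQ" "\<forall>x\<in>TQ. \<not> lexless \<beta>0 x" using lex_max by blast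
  define \<mu> where "\<mu> = (\<lambda>i. \<alpha>0 i + \<beta>0 i)"
  define z :: "nat \<Rightarrow> nat" where "z = (\<lambda>_. 0)"
  have md: "mdeg n \<mu> = ord n P + ord n Q" using a0 b0 by (simp add: \<mu>_def mdeg_add TP_def TQ_def)
  have key: "\<alpha> = \<alpha>0 \<and> \<beta> = \<beta>0 \<and> \<gamma> = z"
    if h: "\<alpha> \<in> opsupp P" "\<beta> \<in> opsupp Q" "\<gamma> \<in> below n \<alpha>" "(\<lambda>i. \<alpha> i - \<gamma> i + \<beta> i) = \<mu>"
    for \<alpha> \<beta> \<gamma>
  proof -
    have e: "mdeg n \<alpha> - mdeg n \<gamma> + mdeg n \<beta> = ord n P + ord n Q"
      using mdeg_agb(1)[OF h(3), of \<beta>] h(4) md by simp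
    have "mdeg n \<gamma> \<le> mdeg n \<alpha>" using mdeg_agb(2)[OF h(3)] .
    moreover have "mdeg n \<alpha> \<le> ord n P" "mdeg n \<beta> \<le> ord n Q" using h ord_le assms by auto
    ultimately have g0: "mdeg n \<gamma> = 0" and da: "mdeg n \<alpha> = ord n P" and db: "mdeg n \<beta> = ord n Q"
      using e by linarith+
    have gz: "\<gamma> = z" using below_zero[OF h(3) g0] z_def by simp
    have sum: "\<And>i. \<alpha> i + \<beta> i = \<alpha>0 i + \<beta>0 i"
      using fun_cong[OF h(4)] gz by (simp add: z_def \<mu>_def)
    have aT: "\<alpha> \<in> TP" and bT: "\<beta> \<in> TQ" using h da db by (auto simp: TP_def TQ_def)
    have "\<alpha> = \<alpha>0"
    proof (rule ccontr)
      assume "\<alpha> \<noteq> \<alpha>0"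
      then have "lexless \<alpha> \<alpha>0" using lexless_total a0 aT by blast
      then obtain i where i: "\<alpha> i < \<alpha>0 i" "\<forall>j<i. \<alpha> j = \<alpha>0 j" by (auto simp: lexless_def)
      have "\<beta>0 i < \<beta> i" using sum[of i] i(1) by linarith
      moreover have "\<forall>j<i. \<beta>0 j = \<beta> j" using sum i(2) by (metis add_left_cancel)
      ultimately have "lexless \<beta>0 \<beta>" unfolding lexless_def by blast
      then show False using b0 bT by blast
    qed
    moreover then have "\<beta> = \<beta>0" using sum by (simp add: fun_eq_iff)
    ultimately show ?thesis using gz by simp
  qed
  let ?c = "P \<alpha>0 * Q \<beta>0"
  have "opmul n \<delta> P Q \<mu> = (\<Sum>\<alpha>\<in>opsupp P. \<Sum>\<beta>\<in>opsupp Q. \<Sum>\<gamma>\<in>below n \<alpha>.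
          if \<alpha> = \<alpha>0 then (if \<beta> = \<beta>0 then (if \<gamma> = z then ?c else 0) else 0) else 0)"
    unfolding opmul_def
  proof (intro sum.cong refl)
    fix \<alpha> \<beta> \<gamma> assume h: "\<alpha> \<in> opsupp P" "\<beta> \<in> opsupp Q" "\<gamma> \<in> below n \<alpha>"
    show "(if (\<lambda>i. \<alpha> i - \<gamma> i + \<beta> i) = \<mu> then P \<alpha> * of_nat (mchoose n \<alpha> \<gamma>) * dpow n \<delta> \<gamma> (Q \<beta>) else 0)
      = (if \<alpha> = \<alpha>0 then (if \<beta> = \<beta>0 then (if \<gamma> = z then ?c else 0) else 0) else 0)"
    proof (cases "(\<lambda>i. \<alpha> i - \<gamma> i + \<beta> i) = \<mu>")
      case True
      then show ?thesis using key[OF h True] by (simp add: z_def dpow_zero' mchoose_zero)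
    next
      case False
      then have "\<not> (\<alpha> = \<alpha>0 \<and> \<beta> = \<beta>0 \<and> \<gamma> = z)" by (auto simp: z_def \<mu>_def)
      then show ?thesis using False by auto
    qed
  qed
  also have "\<dots> = (\<Sum>\<alpha>\<in>opsupp P. \<Sum>\<beta>\<in>opsupp Q. if \<alpha> = \<alpha>0 then (if \<beta> = \<beta>0 then ?c else 0) else 0)"
    by (intro sum.cong refl) (simp add: finite_below z_def zero_below)
  also have "\<dots> = (\<Sum>\<alpha>\<in>opsupp P. if \<alpha> = \<alpha>0 then ?c else 0)"
    by (intro sum.cong refl) (use assms(2) b0 in \<open>simp add: TQ_def\<close>)
  also have "\<dots> = ?c"
    using assms(1) a0 by (simp add: TP_def)
  finally have "opmul n \<delta> P Q \<mu> = ?c" .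
  moreover have "?c \<noteq> 0" using a0 b0 by (auto simp: TP_def TQ_def opsupp_def)
  ultimately have "opmul n \<delta> P Q \<mu> \<noteq> 0" by simp
  then show ?thesis using md by blast
qed


lemma is_op_diff: fixes P P' :: "(nat \<Rightarrow> nat) \<Rightarrow> 'a::ab_group_add" shows "is_op n P \<Longrightarrow> is_op n P' \<Longrightarrow> is_op n (\<lambda>\<alpha>. P \<alpha> - P' \<alpha>)"
proof -
  assume a: "is_op n P" "is_op n P'"
  have "{\<alpha>. P \<alpha> - P' \<alpha> \<noteq> 0} \<subseteq> {\<alpha>. P \<alpha> \<noteq> 0} \<union> {\<alpha>. P' \<alpha> \<noteq> 0}" by force
  then have "finite {\<alpha>. P \<alpha> - P' \<alpha> \<noteq> 0}" using a by (auto simp: is_op_def intro: finite_subset)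
  moreover have "\<forall>\<alpha>. P \<alpha> - P' \<alpha> \<noteq> 0 \<longrightarrow> (\<forall>i\<ge>n. \<alpha> i = 0)"
    using a unfolding is_op_def by (metis diff_self diff_zero)
  ultimately show ?thesis by (simp add: is_op_def)
qed

theorem proposition4:
  fixes n :: nat and \<delta> :: "nat \<Rightarrow> 'a::field_char_0 \<Rightarrow> 'a"
    and L M M1 L1 M1' L1' :: "(nat \<Rightarrow> nat) \<Rightarrow> 'a"
  assumes "diff_field n \<delta>"
    and "is_op n L" "is_op n M" "is_op n M1" "is_op n L1" "is_op n M1'" "is_op n L1'"
    and "ord n L \<ge> 1" "ord n M = 1"
    and "\<not> right_divisible n \<delta> L M"
    and "opmul n \<delta> M1 L = opmul n \<delta> L1 M"
    and "opmul n \<delta> M1' L = opmul n \<delta> L1' M"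
    and "Sym n L = Sym n L1" "Sym n L = Sym n L1'"
  shows "M1 = M1' \<and> L1 = L1'"
proof -
  have fL: "finite (opsupp L)" and fM: "finite (opsupp M)" and fM1: "finite (opsupp M1)"
    and fL1: "finite (opsupp L1)" and fM1': "finite (opsupp M1')" and fL1': "finite (opsupp L1')"
    using assms(2-7) is_op_fin by auto
  define d where "d = ord n L"
  have SL: "opsupp L \<noteq> {}" using assms(8) by (auto simp: ord_def)
  have SM: "opsupp M \<noteq> {}" using assms(9) by (auto simp: ord_def)
  obtain \<alpha>L where \<alpha>L: "\<alpha>L \<in> opsupp L" "mdeg n \<alpha>L = d" using ord_ex[OF fL SL] d_def by blast
  have LaL: "L \<alpha>L \<noteq> 0" using \<alpha>L by (simp add: opsupp_def)
  have sL: "Sym n L \<alpha>L = L \<alpha>L" using \<alpha>L d_def by (simp add: Sym_def)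
  have o1: "ord n L1 = d"
  proof -
    have "Sym n L1 \<alpha>L \<noteq> 0" using assms(13) sL LaL by simp
    then show ?thesis using \<alpha>L by (auto simp: Sym_def split: if_splits)
  qed
  have o1': "ord n L1' = d"
  proof -
    have "Sym n L1' \<alpha>L \<noteq> 0" using assms(14) sL LaL by simp
    then show ?thesis using \<alpha>L by (auto simp: Sym_def split: if_splits)
  qed
  have topeq: "L1 \<alpha> = L1' \<alpha>" if "mdeg n \<alpha> = d" for \<alpha>
  proof -
    have "Sym n L \<alpha> = L \<alpha>" "Sym n L1 \<alpha> = L1 \<alpha>" "Sym n L1' \<alpha> = L1' \<alpha>"
      using that o1 o1' d_def by (auto simp: Sym_def)
    then show ?thesis using assms(13,14) by metis
  qed
  define E where "E = (\<lambda>\<alpha>. L1 \<alpha> - L1' \<alpha>)"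
  define F where "F = (\<lambda>\<alpha>. M1 \<alpha> - M1' \<alpha>)"
  have opE: "is_op n E" unfolding E_def using assms(5,7) by (rule is_op_diff)
  have opF: "is_op n F" unfolding F_def using assms(4,6) by (rule is_op_diff)
  have fE: "finite (opsupp E)" and fF: "finite (opsupp F)" using opE opF is_op_fin by auto
  have Ebound: "\<forall>\<alpha>\<in>opsupp E. mdeg n \<alpha> \<le> d - 1"
  proof
    fix \<alpha> assume a: "\<alpha> \<in> opsupp E"
    then have ne: "L1 \<alpha> \<noteq> L1' \<alpha>" by (simp add: opsupp_def E_def)
    then have "mdeg n \<alpha> \<noteq> d" using topeq by blast
    moreover have "mdeg n \<alpha> \<le> d"
    proof (cases "L1 \<alpha> = 0")
      case True
      then have "\<alpha> \<in> opsupp L1'" using ne by (simp add: opsupp_def)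
      then show ?thesis using ord_le[OF fL1'] o1' by auto
    next
      case False
      then have "\<alpha> \<in> opsupp L1" by (simp add: opsupp_def)
      then show ?thesis using ord_le[OF fL1] o1 by auto
    qed
    ultimately show "mdeg n \<alpha> \<le> d - 1" by simp
  qed
  have FE: "opmul n \<delta> F L = opmul n \<delta> E M"
  proof
    fix \<mu>
    show "opmul n \<delta> F L \<mu> = opmul n \<delta> E M \<mu>"
      unfolding F_def E_def opmul_diff[OF fM1 fM1'] opmul_diff[OF fL1 fL1']
      using assms(11,12) by simp
  qed
  have Mbound: "\<forall>\<beta>\<in>opsupp M. mdeg n \<beta> \<le> 1" using ord_le[OF fM, of _ n] assms(9) by auto
  have F0: "F = (\<lambda>_. 0)"
  proof (rule ccontr)
    assume Fne: "F \<noteq> (\<lambda>_. 0)"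
    then have SF: "opsupp F \<noteq> {}" by (auto simp: opsupp_def)
    have oF: "ord n F = 0"
    proof (rule ccontr)
      assume "ord n F \<noteq> 0"
      obtain \<mu> where mu: "opmul n \<delta> F L \<mu> \<noteq> 0" "mdeg n \<mu> = ord n F + ord n L"
        using opmul_top[OF fF fL SF SL] by blast
      then have "opmul n \<delta> E M \<mu> \<noteq> 0" using FE by simp
      then have "mdeg n \<mu> \<le> (d - 1) + 1" using opmul_upper[OF Ebound Mbound] by blast
      then show False using mu \<open>ord n F \<noteq> 0\<close> d_def assms(8) by simp
    qed
    have supF: "opsupp F \<subseteq> {\<lambda>_. 0}"
    proof
      fix \<alpha> assume a: "\<alpha> \<in> opsupp F"
      then have m0: "mdeg n \<alpha> = 0" using ord_le[OF fF a, of n] oF by simp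
      have "\<alpha> = (\<lambda>_. 0)"
      proof
        fix i show "\<alpha> i = 0"
        proof (cases "i < n")
          case True then show ?thesis using m0 by (auto simp: mdeg_def)
        next
          case False then show ?thesis using a opF by (auto simp: is_op_def opsupp_def)
        qed
      qed
      then show "\<alpha> \<in> {\<lambda>_. 0}" by simp
    qed
    define a where "a = F (\<lambda>_. 0)"
    have a0: "a \<noteq> 0" using SF supF by (auto simp: a_def opsupp_def)
    have "L = opmul n \<delta> (\<lambda>\<alpha>. inverse a * E \<alpha>) M"
    proof
      fix \<mu>
      have "opmul n \<delta> F L \<mu> = a * L \<mu>" using opmul_const[OF supF fL] a_def by simp
      then have "a * L \<mu> = opmul n \<delta> E M \<mu>" using FE by simp
      then show "L \<mu> = opmul n \<delta> (\<lambda>\<alpha>. inverse a * E \<alpha>) M \<mu>"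
      proof -
        have "opmul n \<delta> (\<lambda>\<alpha>. inverse a * E \<alpha>) M \<mu> = inverse a * opmul n \<delta> E M \<mu>"
          by (rule opmul_scale[OF fE])
        also have "\<dots> = inverse a * (a * L \<mu>)" using \<open>a * L \<mu> = opmul n \<delta> E M \<mu>\<close> by simp
        also have "\<dots> = L \<mu>" using a0 by (simp add: mult.assoc[symmetric])
        finally show ?thesis by simp
      qed
    qed
    moreover have "is_op n (\<lambda>\<alpha>. inverse a * E \<alpha>)"
      using opE a0 by (simp add: is_op_def)
    ultimately have "right_divisible n \<delta> L M" unfolding right_divisible_def by blast
    then show False using assms(10) by blast
  qed
  have M1eq: "M1 = M1'"
  proof
    fix \<alpha> show "M1 \<alpha> = M1' \<alpha>" using fun_cong[OF F0, of \<alpha>] by (simp add: F_def)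
  qed
  have E0: "E = (\<lambda>_. 0)"
  proof (rule ccontr)
    assume "E \<noteq> (\<lambda>_. 0)"
    then have SE: "opsupp E \<noteq> {}" by (auto simp: opsupp_def)
    obtain \<mu> where "opmul n \<delta> E M \<mu> \<noteq> 0" using opmul_top[OF fE fM SE SM] by blast
    moreover have "opmul n \<delta> F L \<mu> = 0" using F0 by (simp add: opmul_def opsupp_def)
    ultimately show False using FE by simp
  qed
  have "L1 = L1'"
  proof
    fix \<alpha> show "L1 \<alpha> = L1' \<alpha>" using fun_cong[OF E0, of \<alpha>] by (simp add: E_def)
  qed
  with M1eq show ?thesis by simp
qed

end
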